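(* For all $m\ge2$ (and all $n$, with the convention below), $$A_{n,m}(u,v)=B_{n-1,m}(uv)+A_{n-1,m}(1,v)+A_{n-2,m-1}(1,uv)+\frac{uv}{1-uv}\Big(A_{n-1,m-1}(1,uv)-(uv)^mA_{n-1,m-1}(1,1)\Big)$$ and $$B_{n,m}(v)=B_{n-1,m}(v)+A_{n-2,m-1}(1,v)+\frac{v}{1-v}\Big(A_{n-1,m-1}(1,v)-v^mA_{n-1,m-1}(1,1)\Big).$$
   Context: An ascent sequence of length $n$ is a sequence $x_1\cdots x_n$ of non-negative integers with $x_1=0$ and $x_i\le \mathrm{asc}(x_1\cdots x_{i-1})+1$ for $1<i\le n$, where $\mathrm{asc}$ counts ascents (indices $j$ with $x_j<x_{j+1}$). It avoids $021$ if there are no $i<j<k$ with $x_i<x_k<x_j$. For $n\ge1$, $0\le s\le r\le m<n$, let $a_{n,m,r,s}$ be the number of $021$-avoiding ascent sequences of length $n$ with exactly $m$ ascents, largest letter $r$ and last letter $s$. Define $A_{n,m,r}(u)=\sum_{s=0}^r a_{n,m,r,s}u^s$, $A_{n,m}(u,v)=\sum_{r=0}^m A_{n,m,r}(u)v^r$, and $B_{n,m}(v)=\sum_{r=0}^m a_{n,m,r,r}v^r$ for $n>m\ge0$, with all these polynomials taken to be $0$ when $n\le m$ or $n<1$. (The quotients by $1-uv$ and $1-v$ are polynomials.) *)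

theory Defs
  imports Complex_Main
begin

definition asc :: "nat list \<Rightarrow> nat" where
  "asc xs = card {j. Suc j < length xs \<and> xs ! j < xs ! Suc j}"

definition ascent_seq :: "nat list \<Rightarrow> bool" where
  "ascent_seq xs \<longleftrightarrow> xs \<noteq> [] \<and> xs ! 0 = 0 \<and>
     (\<forall>i. 0 < i \<and> i < length xs \<longrightarrow> xs ! i \<le> asc (take i xs) + 1)"

definition avoids021 :: "nat list \<Rightarrow> bool" where
  "avoids021 xs \<longleftrightarrow> \<not> (\<exists>i j k. i < j \<and> j < k \<and> k < length xs \<and>
      xs ! i < xs ! k \<and> xs ! k < xs ! j)"

definition acount :: "nat \<Rightarrow> nat \<Rightarrow> nat \<Rightarrow> nat \<Rightarrow> nat" where
  "acount n m r s = card {xs. length xs = n \<and> ascent_seq xs \<and> avoids021 xs \<and>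
      asc xs = m \<and> Max (set xs) = r \<and> last xs = s}"

definition Apoly3 :: "nat \<Rightarrow> nat \<Rightarrow> nat \<Rightarrow> real \<Rightarrow> real" where
  "Apoly3 n m r u = (if n \<le> m \<or> n < 1 then 0
      else (\<Sum>s=0..r. real (acount n m r s) * u ^ s))"

definition Apoly :: "nat \<Rightarrow> nat \<Rightarrow> real \<Rightarrow> real \<Rightarrow> real" where
  "Apoly n m u v = (if n \<le> m \<or> n < 1 then 0
      else (\<Sum>r=0..m. Apoly3 n m r u * v ^ r))"

definition Bpoly :: "nat \<Rightarrow> nat \<Rightarrow> real \<Rightarrow> real" where
  "Bpoly n m v = (if n \<le> m \<or> n < 1 then 0
      else (\<Sum>r=0..m. real (acount n m r r) * v ^ r))"

end

theory Submission
  imports Defs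
begin

lemma asc_snoc:
  assumes "ys \<noteq> []"
  shows "asc (ys @ [a]) = asc ys + (if last ys < a then 1 else 0)"
proof -
  have eq: "{j. Suc j < length (ys @ [a]) \<and> (ys @ [a]) ! j < (ys @ [a]) ! Suc j}
      = {j. Suc j < length ys \<and> ys ! j < ys ! Suc j} \<union> (if last ys < a then {length ys - 1} else {})"
  proof (rule set_eqI)
    fix j
    show "j \<in> {j. Suc j < length (ys @ [a]) \<and> (ys @ [a]) ! j < (ys @ [a]) ! Suc j} \<longleftrightarrow>
      j \<in> {j. Suc j < length ys \<and> ys ! j < ys ! Suc j} \<union> (if last ys < a then {length ys - 1} else {})"
    proof (cases "Suc j < length ys")
      case True then show ?thesis by (auto simp: nth_append)
    next
      case False
      show ?thesis
      proof (cases "Suc j = length ys")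
        case True
        then have "j = length ys - 1" "j < length ys" by auto
        then show ?thesis using True assms by (auto simp: nth_append last_conv_nth)
      next
        case False2: False
        then show ?thesis using False assms by auto
      qed
    qed
  qed
  have fin: "finite {j. Suc j < length ys \<and> ys ! j < ys ! Suc j}" by (rule finite_subset[of _ "{..<length ys}"]) auto
  show ?thesis unfolding asc_def eq
    by (subst card_Un_disjoint) (use fin in auto)
qed


lemma asc_le: "asc xs \<le> length xs - 1"
proof -
  have "{j. Suc j < length xs \<and> xs ! j < xs ! Suc j} \<subseteq> {..<length xs - 1}" by auto
  from card_mono[OF _ this] show ?thesis unfolding asc_def by simp
qed

lemma ascent_seq_snoc:
  assumes "ys \<noteq> []"
  shows "ascent_seq (ys @ [a]) \<longleftrightarrow> ascent_seq ys \<and> a \<le> asc ys + 1"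
proof
  assume h: "ascent_seq (ys @ [a])"
  have "ys ! 0 = 0" using h assms unfolding ascent_seq_def by (simp add: nth_append)
  moreover have "\<forall>i. 0 < i \<and> i < length ys \<longrightarrow> ys ! i \<le> asc (take i ys) + 1"
  proof (intro allI impI)
    fix i assume i: "0 < i \<and> i < length ys"
    then have "(ys @ [a]) ! i \<le> asc (take i (ys @ [a])) + 1" using h unfolding ascent_seq_def by simp
    then show "ys ! i \<le> asc (take i ys) + 1" using i by (simp add: nth_append)
  qed
  moreover have "a \<le> asc ys + 1"
  proof -
    have "0 < length ys" using assms by simp
    have "\<forall>i. 0 < i \<and> i < length (ys @ [a]) \<longrightarrow> (ys @ [a]) ! i \<le> asc (take i (ys @ [a])) + 1"
      using h unfolding ascent_seq_def by (elim conjE)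
    then have "0 < length ys \<and> length ys < length (ys @ [a]) \<longrightarrow> (ys @ [a]) ! length ys \<le> asc (take (length ys) (ys @ [a])) + 1"
      by (rule spec)
    then have "(ys @ [a]) ! length ys \<le> asc (take (length ys) (ys @ [a])) + 1"
      using \<open>0 < length ys\<close> by (simp only: length_append_singleton lessI simp_thms)
    then show ?thesis by simp
  qed
  ultimately show "ascent_seq ys \<and> a \<le> asc ys + 1" using assms unfolding ascent_seq_def by simp
next
  assume h: "ascent_seq ys \<and> a \<le> asc ys + 1"
  show "ascent_seq (ys @ [a])" unfolding ascent_seq_def
  proof (intro conjI allI impI)
    show "ys @ [a] \<noteq> []" by simp
    show "(ys @ [a]) ! 0 = 0" using h assms unfolding ascent_seq_def by (simp add: nth_append)
    fix i assume i: "0 < i \<and> i < length (ys @ [a])"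
    show "(ys @ [a]) ! i \<le> asc (take i (ys @ [a])) + 1"
    proof (cases "i < length ys")
      case True then show ?thesis using h i unfolding ascent_seq_def by (simp add: nth_append)
    next
      case False then have "i = length ys" using i by simp
      then show ?thesis using h by simp
    qed
  qed
qed

lemma avoid_snoc:
  assumes "ys \<noteq> []" "ys ! 0 = 0"
  shows "avoids021 (ys @ [a]) \<longleftrightarrow> avoids021 ys \<and> (a = 0 \<or> Max (set ys) \<le> a)"
proof
  assume h: "avoids021 (ys @ [a])"
  have "avoids021 ys" unfolding avoids021_def
  proof
    assume "\<exists>i j k. i < j \<and> j < k \<and> k < length ys \<and> ys ! i < ys ! k \<and> ys ! k < ys ! j"
    then obtain i j k where "i < j \<and> j < k \<and> k < length ys \<and> ys ! i < ys ! k \<and> ys ! k < ys ! j" by blast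
    then have "i < j \<and> j < k \<and> k < length (ys@[a]) \<and> (ys@[a]) ! i < (ys@[a]) ! k \<and> (ys@[a]) ! k < (ys@[a]) ! j"
      by (auto simp: nth_append)
    then show False using h unfolding avoids021_def by blast
  qed
  moreover have "a = 0 \<or> Max (set ys) \<le> a"
  proof (rule ccontr)
    assume c: "\<not> (a = 0 \<or> Max (set ys) \<le> a)"
    have "Max (set ys) \<in> set ys" using assms by simp
    then obtain j where j: "j < length ys" "ys ! j = Max (set ys)" by (meson in_set_conv_nth)
    have am: "a < Max (set ys)" "0 < a" using c by auto
    then have "j \<noteq> 0" using j assms by (metis not_less_zero)
    then have "0 < j \<and> j < length ys \<and> length ys < length (ys @ [a]) \<and>
       (ys@[a]) ! 0 < (ys@[a]) ! length ys \<and> (ys@[a]) ! length ys < (ys@[a]) ! j"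
      using j assms am by (simp add: nth_append)
    then show False using h unfolding avoids021_def by blast
  qed
  ultimately show "avoids021 ys \<and> (a = 0 \<or> Max (set ys) \<le> a)" by blast
next
  assume h: "avoids021 ys \<and> (a = 0 \<or> Max (set ys) \<le> a)"
  show "avoids021 (ys @ [a])" unfolding avoids021_def
  proof
    assume "\<exists>i j k. i < j \<and> j < k \<and> k < length (ys @ [a]) \<and> (ys @ [a]) ! i < (ys @ [a]) ! k \<and> (ys @ [a]) ! k < (ys @ [a]) ! j"
    then obtain i j k where ijk: "i < j" "j < k" "k < length (ys @ [a])" "(ys @ [a]) ! i < (ys @ [a]) ! k" "(ys @ [a]) ! k < (ys @ [a]) ! j" by blast
    show False
    proof (cases "k < length ys")
      case True
      then show ?thesis using h ijk unfolding avoids021_def by (auto simp: nth_append)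
    next
      case False
      then have k: "k = length ys" using ijk by simp
      then have ia: "ys ! i < a" "a < ys ! j" "j < length ys" using ijk by (auto simp: nth_append)
      have jm: "ys ! j \<le> Max (set ys)" using ia(3) by simp
      show False using h ia jm by linarith
    qed
  qed
qed

definition good :: "nat list \<Rightarrow> bool" where
  "good xs \<longleftrightarrow> ascent_seq xs \<and> avoids021 xs"

lemma good_snoc:
  assumes "ys \<noteq> []"
  shows "good (ys @ [a]) \<longleftrightarrow> good ys \<and> a \<le> asc ys + 1 \<and> (a = 0 \<or> Max (set ys) \<le> a)"
proof -
  have z: "ascent_seq ys \<Longrightarrow> ys ! 0 = 0" unfolding ascent_seq_def by simp
  show ?thesis unfolding good_def
    using ascent_seq_snoc[OF assms, of a] avoid_snoc[OF assms, of a] z by auto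
qed

lemma Max_snoc: "ys \<noteq> [] \<Longrightarrow> Max (set (ys @ [a])) = max (Max (set ys)) a"
  by (simp add: max.commute)

lemma asc_single: "asc [a] = 0" unfolding asc_def by simp

lemma good_props:
  "good xs \<Longrightarrow> Max (set xs) \<le> asc xs \<and> (last xs = 0 \<or> last xs = Max (set xs))
     \<and> (0 < asc xs \<longrightarrow> 0 < Max (set xs))"
proof (induction xs rule: rev_induct)
  case Nil
  then show ?case unfolding good_def ascent_seq_def by simp
next
  case (snoc a ys)
  show ?case
  proof (cases "ys = []")
    case True
    then have "a = 0" using snoc.prems unfolding good_def ascent_seq_def by simp
    then show ?thesis using True by (simp add: asc_single)
  next
    case False
    have g: "good ys" "a \<le> asc ys + 1" "a = 0 \<or> Max (set ys) \<le> a"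
      using snoc.prems good_snoc[OF False] by auto
    note IH = snoc.IH[OF g(1)]
    have lm: "last ys \<le> Max (set ys)" using False by simp
    show ?thesis
    proof (cases "last ys < a")
      case True
      then show ?thesis using g IH False by (auto simp: asc_snoc Max_snoc)
    next
      case F: False
      have am: "a \<le> Max (set ys)" using F lm by linarith
      have e1: "Max (set (ys @ [a])) = Max (set ys)" using am False by (simp add: Max_snoc)
      have e2: "asc (ys @ [a]) = asc ys" using F False by (simp add: asc_snoc)
      have la: "a = 0 \<or> a = Max (set ys)" using g(3) am by linarith
      show ?thesis using e1 e2 la IH by auto
    qed
  qed
qed

lemma good_nonempty: "good xs \<Longrightarrow> xs \<noteq> []" unfolding good_def ascent_seq_def by simp

definition S :: "nat \<Rightarrow> nat \<Rightarrow> nat list set" where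
  "S n m = {xs. length xs = n \<and> good xs \<and> asc xs = m}"

lemma finite_S: "finite (S n m)"
proof -
  have "S n m \<subseteq> {xs. set xs \<subseteq> {0..m} \<and> length xs = n}"
  proof
    fix xs assume "xs \<in> S n m"
    then have h: "length xs = n" "good xs" "asc xs = m" unfolding S_def by auto
    have "\<forall>x\<in>set xs. x \<le> m"
    proof
      fix x assume "x \<in> set xs"
      then have "x \<le> Max (set xs)" by simp
      then show "x \<le> m" using good_props[OF h(2)] h(3) by linarith
    qed
    then show "xs \<in> {xs. set xs \<subseteq> {0..m} \<and> length xs = n}" using h by auto
  qed
  then show ?thesis by (rule finite_subset) (simp add: finite_lists_length_eq)
qed

lemma S_empty: "n \<le> m \<or> n < 1 \<Longrightarrow> S n m = {}"
proof -
  assume a: "n \<le> m \<or> n < 1"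
  { fix xs assume "xs \<in> S n m"
    then have h: "length xs = n" "good xs" "asc xs = m" unfolding S_def by auto
    have "xs \<noteq> []" using good_nonempty[OF h(2)] .
    then have False using asc_le[of xs] h a by (cases xs) auto }
  then show ?thesis by blast
qed

lemma acount_S: "acount n m r s = card {xs \<in> S n m. Max (set xs) = r \<and> last xs = s}"
  unfolding acount_def S_def good_def by (rule arg_cong[where f=card]) auto

lemma S_Max: "xs \<in> S n m \<Longrightarrow> Max (set xs) \<le> m"
  unfolding S_def using good_props by auto

lemma S_last: "xs \<in> S n m \<Longrightarrow> last xs \<le> Max (set xs)"
  unfolding S_def using good_nonempty by auto

definition Aset :: "nat \<Rightarrow> nat \<Rightarrow> real \<Rightarrow> real \<Rightarrow> real" where
  "Aset n m u v = (\<Sum>xs\<in>S n m. u ^ last xs * v ^ Max (set xs))"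

definition Bset :: "nat \<Rightarrow> nat \<Rightarrow> real \<Rightarrow> real" where
  "Bset n m v = (\<Sum>xs\<in>S n m. if last xs = Max (set xs) then v ^ Max (set xs) else 0)"

lemma Apoly_eq: "Apoly n m u v = Aset n m u v"
proof (cases "n \<le> m \<or> n < 1")
  case True
  then show ?thesis unfolding Apoly_def Aset_def using S_empty[OF True] by simp
next
  case False
  let ?f = "\<lambda>xs. u ^ last xs * v ^ Max (set xs)"
  have "Aset n m u v = (\<Sum>r=0..m. \<Sum>xs\<in>{xs. xs \<in> S n m \<and> Max (set xs) = r}. ?f xs)"
    unfolding Aset_def by (rule sum.group[symmetric]) (use finite_S S_Max in auto)
  also have "\<dots> = (\<Sum>r=0..m. Apoly3 n m r u * v ^ r)"
  proof (rule sum.cong[OF refl])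
    fix r assume r: "r \<in> {0..m}"
    let ?T = "{xs. xs \<in> S n m \<and> Max (set xs) = r}"
    have fT: "finite ?T" using finite_S by simp
    have "(\<Sum>xs\<in>?T. ?f xs) = (\<Sum>s=0..r. \<Sum>xs\<in>{xs. xs \<in> ?T \<and> last xs = s}. ?f xs)"
      by (rule sum.group[symmetric]) (use fT S_last in auto)
    also have "\<dots> = (\<Sum>s=0..r. real (acount n m r s) * u ^ s * v ^ r)"
    proof (rule sum.cong[OF refl])
      fix s assume s: "s \<in> {0..r}"
      have e: "{xs. xs \<in> ?T \<and> last xs = s} = {xs \<in> S n m. Max (set xs) = r \<and> last xs = s}" by auto
      have "(\<Sum>xs\<in>{xs. xs \<in> ?T \<and> last xs = s}. ?f xs) = (\<Sum>xs\<in>{xs \<in> S n m. Max (set xs) = r \<and> last xs = s}. u ^ s * v ^ r)"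
        unfolding e by (rule sum.cong) auto
      also have "\<dots> = real (acount n m r s) * u ^ s * v ^ r" by (simp add: acount_S)
      finally show "(\<Sum>xs\<in>{xs. xs \<in> ?T \<and> last xs = s}. ?f xs) = real (acount n m r s) * u ^ s * v ^ r" .
    qed
    also have "\<dots> = Apoly3 n m r u * v ^ r"
      unfolding Apoly3_def using False by (simp add: sum_distrib_right)
    finally show "(\<Sum>xs\<in>?T. ?f xs) = Apoly3 n m r u * v ^ r" .
  qed
  finally show ?thesis unfolding Apoly_def using False by simp
qed

lemma Bpoly_eq: "Bpoly n m v = Bset n m v"
proof (cases "n \<le> m \<or> n < 1")
  case True
  then show ?thesis unfolding Bpoly_def Bset_def using S_empty[OF True] by simp
next
  case False
  let ?f = "\<lambda>xs. if last xs = Max (set xs) then v ^ Max (set xs) else 0"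
  have "Bset n m v = (\<Sum>r=0..m. \<Sum>xs\<in>{xs. xs \<in> S n m \<and> Max (set xs) = r}. ?f xs)"
    unfolding Bset_def by (rule sum.group[symmetric]) (use finite_S S_Max in auto)
  also have "\<dots> = (\<Sum>r=0..m. real (acount n m r r) * v ^ r)"
  proof (rule sum.cong[OF refl])
    fix r assume r: "r \<in> {0..m}"
    let ?T = "{xs. xs \<in> S n m \<and> Max (set xs) = r}"
    have fT: "finite ?T" using finite_S by simp
    have "(\<Sum>xs\<in>?T. ?f xs) = (\<Sum>xs\<in>?T. if last xs = r then v ^ r else 0)"
      by (rule sum.cong) auto
    also have "\<dots> = (\<Sum>xs\<in>{xs\<in>?T. last xs = r}. v ^ r)"
      by (rule sum.inter_filter[OF fT, symmetric])
    also have "{xs\<in>?T. last xs = r} = {xs \<in> S n m. Max (set xs) = r \<and> last xs = r}" by auto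
    finally show "(\<Sum>xs\<in>?T. ?f xs) = real (acount n m r r) * v ^ r" by (simp add: acount_S)
  qed
  finally show ?thesis unfolding Bpoly_def using False by simp
qed

lemma S_lastcases: "xs \<in> S n m \<Longrightarrow> last xs = 0 \<or> last xs = Max (set xs)"
  unfolding S_def using good_props by auto

lemma S_Maxpos: "xs \<in> S n m \<Longrightarrow> 0 < m \<Longrightarrow> 0 < Max (set xs)"
  unfolding S_def using good_props by auto

lemma decomp:
  assumes n: "n \<ge> 2" and m: "m \<ge> 1"
  shows "(\<Sum>xs\<in>S n m. F xs) =
     (\<Sum>ys\<in>S (n-1) m. F (ys @ [0]) + (if last ys = 0 then 0 else F (ys @ [last ys])))
   + (\<Sum>ys\<in>S (n-1) (m-1). \<Sum>a\<in>{max (Suc (last ys)) (Max (set ys))..m}. F (ys @ [a]))"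
proof -
  define B1 where "B1 = (\<lambda>ys::nat list. {0, last ys})"
  define B2 where "B2 = (\<lambda>ys::nat list. {max (Suc (last ys)) (Max (set ys))..m})"
  define Sig where "Sig = Sigma (S (n-1) m) B1 \<union> Sigma (S (n-1) (m-1)) B2"
  have bij: "bij_betw (\<lambda>(ys, a). ys @ [a]) Sig (S n m)"
  proof (rule bij_betwI')
    fix x y assume "x \<in> Sig" "y \<in> Sig"
    show "((\<lambda>(ys, a). ys @ [a]) x = (\<lambda>(ys, a). ys @ [a]) y) = (x = y)"
      by (cases x; cases y) auto
  next
    fix x assume x: "x \<in> Sig"
    obtain ys a where xe: "x = (ys, a)" by (cases x)
    show "(\<lambda>(ys, a). ys @ [a]) x \<in> S n m"
    proof (cases "ys \<in> S (n-1) m \<and> a \<in> B1 ys")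
      case True
      then have h: "length ys = n - 1" "good ys" "asc ys = m" "a = 0 \<or> a = last ys" unfolding S_def B1_def by auto
      have ne: "ys \<noteq> []" using h(1) n by (cases ys) auto
      have yS: "ys \<in> S (n-1) m" using True by blast
      have lc: "last ys = 0 \<or> last ys = Max (set ys)" "last ys \<le> Max (set ys)" "Max (set ys) \<le> asc ys"
        using S_lastcases[OF yS] S_last[OF yS] S_Max[OF yS] h(3) by auto
      have c1: "a \<le> asc ys + 1" using h(4) lc by linarith
      have c2: "a = 0 \<or> Max (set ys) \<le> a" using h(4) lc by linarith
      have c3: "\<not> last ys < a" using h(4) by linarith
      have "good (ys @ [a])" using good_snoc[OF ne, of a] h(2) c1 c2 by blast
      moreover have "asc (ys @ [a]) = m" using h(3) c3 ne by (simp add: asc_snoc)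
      moreover have "length (ys @ [a]) = n" using h(1) n by simp
      ultimately show ?thesis using xe unfolding S_def by simp
    next
      case False
      then have yS: "ys \<in> S (n-1) (m-1)" and aB: "a \<in> B2 ys" using x xe unfolding Sig_def by auto
      then have h: "length ys = n - 1" "good ys" "asc ys = m - 1" unfolding S_def by auto
      have h2: "Suc (last ys) \<le> a" "Max (set ys) \<le> a" "a \<le> m" using aB unfolding B2_def by auto
      have ne: "ys \<noteq> []" using h(1) n by (cases ys) auto
      have c1: "a \<le> asc ys + 1" using h(3) h2(3) m by linarith
      have "good (ys @ [a])" using good_snoc[OF ne, of a] h(2) c1 h2(2) by blast
      moreover have "asc (ys @ [a]) = m" using h(3) h2(1) m ne by (simp add: asc_snoc)
      moreover have "length (ys @ [a]) = n" using h(1) n by simp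
      ultimately show ?thesis using xe unfolding S_def by simp
    qed
  next
    fix xs assume xs: "xs \<in> S n m"
    then have h: "length xs = n" "good xs" "asc xs = m" unfolding S_def by auto
    define ys where "ys = butlast xs"
    define a where "a = last xs"
    have ne0: "xs \<noteq> []" using h(1) n by (cases xs) auto
    have xe: "xs = ys @ [a]" unfolding ys_def a_def using ne0 by simp
    have ly: "length ys = n - 1" using h(1) unfolding ys_def by simp
    have ne: "ys \<noteq> []" using ly n by (cases ys) auto
    have "good (ys @ [a])" using h(2) xe by simp
    then have g: "good ys" "a \<le> asc ys + 1" "a = 0 \<or> Max (set ys) \<le> a" using good_snoc[OF ne, of a] by blast+
    have lc: "last ys = 0 \<or> last ys = Max (set ys)" "last ys \<le> Max (set ys)"
      using good_props[OF g(1)] ne by auto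
    have am: "asc (ys @ [a]) = m" using h(3) xe by simp
    have "(ys, a) \<in> Sig"
    proof (cases "last ys < a")
      case True
      then have as: "asc ys = m - 1" using am ne by (simp add: asc_snoc)
      have Ma: "Max (set ys) \<le> a" using g(3) True by linarith
      have "a \<le> m" using g(2) as am True ne by (simp add: asc_snoc)
      then have "a \<in> B2 ys" using Ma True unfolding B2_def by simp
      moreover have "ys \<in> S (n-1) (m-1)" using g(1) ly as unfolding S_def by simp
      ultimately show ?thesis unfolding Sig_def by blast
    next
      case False
      then have as: "asc ys = m" using am ne by (simp add: asc_snoc)
      have "a = 0 \<or> a = last ys" using g(3) lc False by linarith
      then have "a \<in> B1 ys" unfolding B1_def by blast
      moreover have "ys \<in> S (n-1) m" using g(1) ly as unfolding S_def by simp
      ultimately show ?thesis unfolding Sig_def by blast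
    qed
    moreover have "xs = (\<lambda>(ys, a). ys @ [a]) (ys, a)" using xe by simp
    ultimately show "\<exists>x\<in>Sig. xs = (\<lambda>(ys, a). ys @ [a]) x" by blast
  qed
  have cp: "(\<lambda>x. F ((\<lambda>(ys, a). ys @ [a]) x)) = (\<lambda>(ys,a). F (ys @ [a]))" by auto
  have fin1: "finite (Sigma (S (n-1) m) B1)" using finite_S by (auto simp: B1_def)
  have fin2: "finite (Sigma (S (n-1) (m-1)) B2)" using finite_S by (auto simp: B2_def)
  have disj: "S (n-1) m \<inter> S (n-1) (m-1) = {}" using m unfolding S_def by auto
  then have disj2: "Sigma (S (n-1) m) B1 \<inter> Sigma (S (n-1) (m-1)) B2 = {}" by blast
  have "(\<Sum>xs\<in>S n m. F xs) = (\<Sum>x\<in>Sig. F ((\<lambda>(ys, a). ys @ [a]) x))"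
    by (rule sum.reindex_bij_betw[OF bij, symmetric])
  also have "\<dots> = (\<Sum>x\<in>Sigma (S (n-1) m) B1. F ((\<lambda>(ys, a). ys @ [a]) x))
                 + (\<Sum>x\<in>Sigma (S (n-1) (m-1)) B2. F ((\<lambda>(ys, a). ys @ [a]) x))"
    unfolding Sig_def by (rule sum.union_disjoint[OF fin1 fin2 disj2])
  also have "(\<Sum>x\<in>Sigma (S (n-1) m) B1. F ((\<lambda>(ys, a). ys @ [a]) x))
     = (\<Sum>ys\<in>S (n-1) m. \<Sum>a\<in>B1 ys. F (ys @ [a]))"
    unfolding cp by (rule sum.Sigma[symmetric]) (auto simp: finite_S B1_def)
  also have "\<dots> = (\<Sum>ys\<in>S (n-1) m. F (ys @ [0]) + (if last ys = 0 then 0 else F (ys @ [last ys])))"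
    by (rule sum.cong) (auto simp: B1_def)
  also have "(\<Sum>x\<in>Sigma (S (n-1) (m-1)) B2. F ((\<lambda>(ys, a). ys @ [a]) x))
     = (\<Sum>ys\<in>S (n-1) (m-1). \<Sum>a\<in>B2 ys. F (ys @ [a]))"
    unfolding cp by (rule sum.Sigma[symmetric]) (auto simp: finite_S B2_def)
  finally show ?thesis unfolding B2_def .
qed

lemma geom:
  fixes w :: real
  assumes "w \<noteq> 1" "M \<le> m"
  shows "(\<Sum>a\<in>{Suc M..m}. w ^ a) = w / (1 - w) * (w ^ M - w ^ m)"
  using assms(2)
proof (induction m rule: dec_induct)
  case base
  then show ?case by simp
next
  case (step k)
  have "(\<Sum>a\<in>{Suc M..Suc k}. w ^ a) = (\<Sum>a\<in>{Suc M..k}. w ^ a) + w ^ Suc k"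
    using step.hyps by (simp add: sum.atLeast_Suc_atMost_Suc_shift sum.cl_ivl_Suc)
  also have "\<dots> = w / (1 - w) * (w ^ M - w ^ k) + w ^ Suc k" using step.IH by simp
  also have "\<dots> = w / (1 - w) * (w ^ M - w ^ Suc k)"
  proof -
    have "1 - w \<noteq> 0" using assms(1) by simp
    then show ?thesis by (simp add: field_simps)
  qed
  finally show ?case .
qed

lemma Zlemma:
  fixes w :: real
  assumes k: "k \<ge> 1"
  shows "(\<Sum>ys\<in>S n' k. if last ys = 0 then w ^ Max (set ys) else 0) = Aset (n' - 1) k 1 w"
proof (cases "n' \<ge> 2")
  case False
  then have "S n' k = {}" "S (n' - 1) k = {}" using k S_empty by auto
  then show ?thesis unfolding Aset_def by simp
next
  case True
  let ?F = "\<lambda>ys. if last ys = 0 then w ^ Max (set ys) else (0::real)"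
  have "(\<Sum>ys\<in>S n' k. ?F ys) =
     (\<Sum>ys\<in>S (n'-1) k. ?F (ys @ [0]) + (if last ys = 0 then 0 else ?F (ys @ [last ys])))
   + (\<Sum>ys\<in>S (n'-1) (k-1). \<Sum>a\<in>{max (Suc (last ys)) (Max (set ys))..k}. ?F (ys @ [a]))"
    by (rule decomp[OF True k])
  also have "(\<Sum>ys\<in>S (n'-1) (k-1). \<Sum>a\<in>{max (Suc (last ys)) (Max (set ys))..k}. ?F (ys @ [a])) = 0"
    by (rule sum.neutral, rule ballI, rule sum.neutral) auto
  also have "(\<Sum>ys\<in>S (n'-1) k. ?F (ys @ [0]) + (if last ys = 0 then 0 else ?F (ys @ [last ys])))
     = (\<Sum>ys\<in>S (n'-1) k. 1 ^ last ys * w ^ Max (set ys))"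
  proof (rule sum.cong[OF refl])
    fix ys assume ys: "ys \<in> S (n'-1) k"
    then have ne: "ys \<noteq> []" using good_nonempty unfolding S_def by auto
    then show "?F (ys @ [0]) + (if last ys = 0 then 0 else ?F (ys @ [last ys])) = 1 ^ last ys * w ^ Max (set ys)"
      by (simp add: Max_snoc)
  qed
  finally show ?thesis unfolding Aset_def by simp
qed

lemma part2:
  fixes w :: real
  assumes m: "m \<ge> 2" and w: "w \<noteq> 1"
  shows "(\<Sum>ys\<in>S n' (m-1). \<Sum>a\<in>{max (Suc (last ys)) (Max (set ys))..m}. w ^ a)
     = Aset (n'-1) (m-1) 1 w + w / (1 - w) * (Aset n' (m-1) 1 w - w ^ m * Aset n' (m-1) 1 1)"
proof -
  have "(\<Sum>ys\<in>S n' (m-1). \<Sum>a\<in>{max (Suc (last ys)) (Max (set ys))..m}. w ^ a)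
      = (\<Sum>ys\<in>S n' (m-1). w / (1 - w) * (w ^ Max (set ys) - w ^ m) + (if last ys = 0 then w ^ Max (set ys) else 0))"
  proof (rule sum.cong[OF refl])
    fix ys assume ys: "ys \<in> S n' (m-1)"
    have Mm: "Max (set ys) \<le> m - 1" using S_Max[OF ys] .
    have Mp: "0 < Max (set ys)" using S_Maxpos[OF ys] m by simp
    have g: "(\<Sum>a\<in>{Suc (Max (set ys))..m}. w ^ a) = w / (1 - w) * (w ^ Max (set ys) - w ^ m)"
      using geom[OF w, of "Max (set ys)" m] Mm by simp
    show "(\<Sum>a\<in>{max (Suc (last ys)) (Max (set ys))..m}. w ^ a)
       = w / (1 - w) * (w ^ Max (set ys) - w ^ m) + (if last ys = 0 then w ^ Max (set ys) else 0)"
    proof (cases "last ys = 0")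
      case True
      then have e: "{max (Suc (last ys)) (Max (set ys))..m} = insert (Max (set ys)) {Suc (Max (set ys))..m}"
        using Mp Mm by auto
      show ?thesis unfolding e using g True by simp
    next
      case False
      then have "last ys = Max (set ys)" using S_lastcases[OF ys] by simp
      then have e: "{max (Suc (last ys)) (Max (set ys))..m} = {Suc (Max (set ys))..m}" by simp
      show ?thesis unfolding e using g False by simp
    qed
  qed
  also have "\<dots> = w / (1 - w) * (\<Sum>ys\<in>S n' (m-1). w ^ Max (set ys) - w ^ m)
      + (\<Sum>ys\<in>S n' (m-1). if last ys = 0 then w ^ Max (set ys) else 0)"
    by (simp add: sum.distrib sum_distrib_left)
  also have "(\<Sum>ys\<in>S n' (m-1). if last ys = 0 then w ^ Max (set ys) else 0) = Aset (n'-1) (m-1) 1 w"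
    by (rule Zlemma) (use m in simp)
  also have "(\<Sum>ys\<in>S n' (m-1). w ^ Max (set ys) - w ^ m) = Aset n' (m-1) 1 w - w ^ m * Aset n' (m-1) 1 1"
    unfolding Aset_def by (simp add: sum_subtractf)
  finally show ?thesis by simp
qed

theorem lemma2:
  fixes n m :: nat and u v :: real
  assumes "m \<ge> 2"
  shows "(u * v \<noteq> 1 \<longrightarrow>
           Apoly n m u v = Bpoly (n - 1) m (u * v) + Apoly (n - 1) m 1 v
             + Apoly (n - 2) (m - 1) 1 (u * v)
             + (u * v) / (1 - u * v) *
                 (Apoly (n - 1) (m - 1) 1 (u * v) - (u * v) ^ m * Apoly (n - 1) (m - 1) 1 1))
         \<and> (v \<noteq> 1 \<longrightarrow>
           Bpoly n m v = Bpoly (n - 1) m v + Apoly (n - 2) (m - 1) 1 v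
             + v / (1 - v) * (Apoly (n - 1) (m - 1) 1 v - v ^ m * Apoly (n - 1) (m - 1) 1 1))"
proof (cases "n \<ge> 2")
  case False
  then have "S n m = {}" "S (n-1) m = {}" "S (n-2) (m-1) = {}" "S (n-1) (m-1) = {}"
    using assms S_empty by auto
  then show ?thesis unfolding Apoly_eq Bpoly_eq Aset_def Bset_def by simp
next
  case True
  have m1: "m \<ge> 1" using assms by simp
  have nn: "n - 1 - 1 = n - 2" by simp
  have A1: "(\<Sum>ys\<in>S (n-1) m. (\<lambda>xs. u ^ last xs * v ^ Max (set xs)) (ys @ [0])
      + (if last ys = 0 then 0 else (\<lambda>xs. u ^ last xs * v ^ Max (set xs)) (ys @ [last ys])))
     = Aset (n-1) m 1 v + Bset (n-1) m (u * v)"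
  proof -
    have "(\<Sum>ys\<in>S (n-1) m. (\<lambda>xs. u ^ last xs * v ^ Max (set xs)) (ys @ [0])
      + (if last ys = 0 then 0 else (\<lambda>xs. u ^ last xs * v ^ Max (set xs)) (ys @ [last ys])))
      = (\<Sum>ys\<in>S (n-1) m. 1 ^ last ys * v ^ Max (set ys)
          + (if last ys = Max (set ys) then (u * v) ^ Max (set ys) else 0))"
    proof (rule sum.cong[OF refl])
      fix ys assume ys: "ys \<in> S (n-1) m"
      then have ne: "ys \<noteq> []" using good_nonempty unfolding S_def by auto
      have Mp: "0 < Max (set ys)" using S_Maxpos[OF ys] m1 by simp
      have lc: "last ys = 0 \<or> last ys = Max (set ys)" using S_lastcases[OF ys] .
      show "(\<lambda>xs. u ^ last xs * v ^ Max (set xs)) (ys @ [0])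
      + (if last ys = 0 then 0 else (\<lambda>xs. u ^ last xs * v ^ Max (set xs)) (ys @ [last ys]))
        = 1 ^ last ys * v ^ Max (set ys) + (if last ys = Max (set ys) then (u * v) ^ Max (set ys) else 0)"
        using ne Mp lc by (auto simp: Max_snoc power_mult_distrib)
    qed
    then show ?thesis unfolding Aset_def Bset_def by (simp add: sum.distrib)
  qed
  have A2: "(\<Sum>ys\<in>S (n-1) (m-1). \<Sum>a\<in>{max (Suc (last ys)) (Max (set ys))..m}.
       (\<lambda>xs. u ^ last xs * v ^ Max (set xs)) (ys @ [a]))
     = (\<Sum>ys\<in>S (n-1) (m-1). \<Sum>a\<in>{max (Suc (last ys)) (Max (set ys))..m}. (u * v) ^ a)"
  proof (rule sum.cong[OF refl], rule sum.cong[OF refl])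
    fix ys a assume ys: "ys \<in> S (n-1) (m-1)" and a: "a \<in> {max (Suc (last ys)) (Max (set ys))..m}"
    then have ne: "ys \<noteq> []" using good_nonempty unfolding S_def by auto
    have "Max (set ys) \<le> a" using a by simp
    then show "(\<lambda>xs. u ^ last xs * v ^ Max (set xs)) (ys @ [a]) = (u * v) ^ a"
      using ne by (simp add: Max_snoc power_mult_distrib max_absorb2)
  qed
  have B1: "(\<Sum>ys\<in>S (n-1) m. (\<lambda>xs. if last xs = Max (set xs) then v ^ Max (set xs) else 0) (ys @ [0])
      + (if last ys = 0 then 0 else (\<lambda>xs. if last xs = Max (set xs) then v ^ Max (set xs) else 0) (ys @ [last ys])))
     = Bset (n-1) m v"
    unfolding Bset_def
  proof (rule sum.cong[OF refl])
    fix ys assume ys: "ys \<in> S (n-1) m"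
    then have ne: "ys \<noteq> []" using good_nonempty unfolding S_def by auto
    have Mp: "0 < Max (set ys)" using S_Maxpos[OF ys] m1 by simp
    have lc: "last ys = 0 \<or> last ys = Max (set ys)" using S_lastcases[OF ys] .
    show "(\<lambda>xs. if last xs = Max (set xs) then v ^ Max (set xs) else 0) (ys @ [0])
      + (if last ys = 0 then 0 else (\<lambda>xs. if last xs = Max (set xs) then v ^ Max (set xs) else 0) (ys @ [last ys]))
      = (if last ys = Max (set ys) then v ^ Max (set ys) else 0)"
      using ne Mp lc by (auto simp: Max_snoc)
  qed
  have B2: "(\<Sum>ys\<in>S (n-1) (m-1). \<Sum>a\<in>{max (Suc (last ys)) (Max (set ys))..m}.
       (\<lambda>xs. if last xs = Max (set xs) then v ^ Max (set xs) else 0) (ys @ [a]))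
     = (\<Sum>ys\<in>S (n-1) (m-1). \<Sum>a\<in>{max (Suc (last ys)) (Max (set ys))..m}. v ^ a)"
  proof (rule sum.cong[OF refl], rule sum.cong[OF refl])
    fix ys a assume ys: "ys \<in> S (n-1) (m-1)" and a: "a \<in> {max (Suc (last ys)) (Max (set ys))..m}"
    then have ne: "ys \<noteq> []" using good_nonempty unfolding S_def by auto
    have "Max (set ys) \<le> a" using a by simp
    then show "(\<lambda>xs. if last xs = Max (set xs) then v ^ Max (set xs) else 0) (ys @ [a]) = v ^ a"
      using ne by (simp add: Max_snoc max_absorb2)
  qed
  show ?thesis
  proof (intro conjI impI)
    assume w: "u * v \<noteq> 1"
    have "Apoly n m u v = Aset n m u v" by (rule Apoly_eq)
    also have "\<dots> = Aset (n-1) m 1 v + Bset (n-1) m (u * v)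
       + (Aset (n-2) (m-1) 1 (u * v) + (u * v) / (1 - u * v) * (Aset (n-1) (m-1) 1 (u * v) - (u * v) ^ m * Aset (n-1) (m-1) 1 1))"
      unfolding Aset_def[of n m u v] decomp[OF True m1] A1 A2 part2[OF assms w, of "n-1", unfolded nn] ..
    finally show "Apoly n m u v = Bpoly (n - 1) m (u * v) + Apoly (n - 1) m 1 v
             + Apoly (n - 2) (m - 1) 1 (u * v)
             + (u * v) / (1 - u * v) *
                 (Apoly (n - 1) (m - 1) 1 (u * v) - (u * v) ^ m * Apoly (n - 1) (m - 1) 1 1)"
      unfolding Apoly_eq Bpoly_eq by simp
  next
    assume w: "v \<noteq> 1"
    have "Bpoly n m v = Bset n m v" by (rule Bpoly_eq)
    also have "\<dots> = Bset (n-1) m v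
       + (Aset (n-2) (m-1) 1 v + v / (1 - v) * (Aset (n-1) (m-1) 1 v - v ^ m * Aset (n-1) (m-1) 1 1))"
      unfolding Bset_def[of n m v] decomp[OF True m1] B1 B2 part2[OF assms w, of "n-1", unfolded nn] ..
    finally show "Bpoly n m v = Bpoly (n - 1) m v + Apoly (n - 2) (m - 1) 1 v
             + v / (1 - v) * (Apoly (n - 1) (m - 1) 1 v - v ^ m * Apoly (n - 1) (m - 1) 1 1)"
      unfolding Apoly_eq Bpoly_eq by simp
  qed
qed

end
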